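(* Let $k\ge2$ and $\ell\ge2$, and let $(F,(a,b))$ be an edge-rooted connected graph such that (i) $F$ has no cut-vertex, (ii) every edge of $F$ is contained in a triangle, and (iii) there is at most one homomorphism $F\to F$ other than the identity, and if it exists it is an automorphism $\varphi$ with $\varphi(a)=b$, $\varphi(b)=a$. If $\ell$ is odd, or if $\ell$ is even and $F$ is rigid, then the sun graph $G((F,(a,b)),2k,\ell)$ is not positive.
   Context: An edge-rooted graph is $(F,(a,b))$ with $F$ a finite simple graph and $(a,b)$ an oriented edge of $F$. A graph is rigid if its only endomorphism is the identity. The sun graph $G((F,(a,b)),2k,\ell)$ is obtained from the cycle $C_{2k(\ell+1)}=v_1v_2\cdots v_{2k(\ell+1)}$ (indices modulo $2k(\ell+1)$) by gluing $2k$ disjoint copies $F^1,\dots,F^{2k}$ of $F$, where for each $i\in[2k]$ the root pair $(a,b)$ of $F^i$ is identified with $(v_{i(\ell+1)+1},v_{i(\ell+1)+2})$ (so the root edge coincides with that cycle edge); consecutive copies are thus separated by paths of length $\ell$ along the cycle. An edge-weighted graph $H$ assigns a real weight $\beta_{xy}$ to each edge; $\hom(G,H)=\sum_{\varphi}\prod_{uv\in E(G)}\beta_{\varphi(u)\varphi(v)}$ over all homomorphisms $\varphi:G\to H$. A graph $G$ is positive if $\hom(G,H)\ge0$ for every edge-weighted graph $H$ (weights may be negative). *)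

theory Defs
  imports Complex_Main "HOL-Library.FuncSet"
begin

definition simple_graph :: "'a set \<Rightarrow> ('a \<Rightarrow> 'a \<Rightarrow> bool) \<Rightarrow> bool" where
  "simple_graph V E \<longleftrightarrow> finite V \<and> (\<forall>x y. E x y \<longrightarrow> x \<in> V \<and> y \<in> V)
     \<and> (\<forall>x y. E x y \<longrightarrow> E y x) \<and> (\<forall>x. \<not> E x x)"

definition edges :: "('a \<Rightarrow> 'a \<Rightarrow> bool) \<Rightarrow> 'a set set" where
  "edges E = {{x, y} | x y. E x y}"

definition homs :: "'a set \<Rightarrow> ('a \<Rightarrow> 'a \<Rightarrow> bool) \<Rightarrow> 'b set \<Rightarrow> ('b \<Rightarrow> 'b \<Rightarrow> bool) \<Rightarrow> ('a \<Rightarrow> 'b) set" where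
  "homs V E W D = {f \<in> V \<rightarrow>\<^sub>E W. \<forall>x y. E x y \<longrightarrow> D (f x) (f y)}"

definition automorphism :: "'a set \<Rightarrow> ('a \<Rightarrow> 'a \<Rightarrow> bool) \<Rightarrow> ('a \<Rightarrow> 'a) \<Rightarrow> bool" where
  "automorphism V E f \<longleftrightarrow> f \<in> V \<rightarrow>\<^sub>E V \<and> bij_betw f V V
     \<and> (\<forall>x\<in>V. \<forall>y\<in>V. E x y \<longleftrightarrow> E (f x) (f y))"

definition rigid :: "'a set \<Rightarrow> ('a \<Rightarrow> 'a \<Rightarrow> bool) \<Rightarrow> bool" where
  "rigid V E \<longleftrightarrow> homs V E V E = {restrict id V}"

definition connected :: "'a set \<Rightarrow> ('a \<Rightarrow> 'a \<Rightarrow> bool) \<Rightarrow> bool" where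
  "connected V E \<longleftrightarrow> (\<forall>x\<in>V. \<forall>y\<in>V. (\<lambda>u w. E u w \<and> u \<in> V \<and> w \<in> V)\<^sup>*\<^sup>* x y)"

definition cut_vertex :: "'a set \<Rightarrow> ('a \<Rightarrow> 'a \<Rightarrow> bool) \<Rightarrow> 'a \<Rightarrow> bool" where
  "cut_vertex V E v \<longleftrightarrow> v \<in> V \<and> \<not> connected (V - {v}) (\<lambda>x y. E x y \<and> x \<noteq> v \<and> y \<noteq> v)"

definition edges_in_triangles :: "('a \<Rightarrow> 'a \<Rightarrow> bool) \<Rightarrow> bool" where
  "edges_in_triangles E \<longleftrightarrow> (\<forall>x y. E x y \<longrightarrow> (\<exists>z. E x z \<and> E y z))"

definition hom_weight :: "'a set \<Rightarrow> ('a \<Rightarrow> 'a \<Rightarrow> bool) \<Rightarrow> 'b set \<Rightarrow> ('b \<Rightarrow> 'b \<Rightarrow> bool)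
    \<Rightarrow> ('b set \<Rightarrow> real) \<Rightarrow> real" where
  "hom_weight V E W D w = (\<Sum>f\<in>homs V E W D. \<Prod>e\<in>edges E. w (f ` e))"

text \<open>Positive: hom(G,H) \<ge> 0 for every finite edge-weighted simple graph H
  (vertices of H taken, w.l.o.g., to be natural numbers).\<close>
definition positive :: "'a set \<Rightarrow> ('a \<Rightarrow> 'a \<Rightarrow> bool) \<Rightarrow> bool" where
  "positive V E \<longleftrightarrow> (\<forall>(W::nat set) D w. simple_graph W D \<longrightarrow> hom_weight V E W D w \<ge> 0)"

text \<open>Cycle vertex v_m (1-based, indices modulo
  N = 2k(l+1)) is represented as Inl ((m-1) mod N); the non-root vertex v of the
  i-th copy F^i is Inr (i,v). The roots a,b of F^i are glued to
  v_{i(l+1)+1}, v_{i(l+1)+2}, i.e. to Inl ((i(l+1)) mod N), Inl ((i(l+1)+1) mod N).\<close>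
definition sun_emb :: "'a \<Rightarrow> 'a \<Rightarrow> nat \<Rightarrow> nat \<Rightarrow> nat \<Rightarrow> 'a \<Rightarrow> nat + nat \<times> 'a" where
  "sun_emb a b k l i v =
     (if v = a then Inl ((i * (l + 1)) mod (2 * k * (l + 1)))
      else if v = b then Inl ((i * (l + 1) + 1) mod (2 * k * (l + 1)))
      else Inr (i, v))"

definition sun_V :: "'a set \<Rightarrow> 'a \<Rightarrow> 'a \<Rightarrow> nat \<Rightarrow> nat \<Rightarrow> (nat + nat \<times> 'a) set" where
  "sun_V V a b k l = Inl ` {0..<2 * k * (l + 1)}
     \<union> {Inr (i, v) | i v. i \<in> {1..2 * k} \<and> v \<in> V - {a, b}}"

definition sun_E :: "('a \<Rightarrow> 'a \<Rightarrow> bool) \<Rightarrow> 'a \<Rightarrow> 'a \<Rightarrow> nat \<Rightarrow> nat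
    \<Rightarrow> (nat + nat \<times> 'a) \<Rightarrow> (nat + nat \<times> 'a) \<Rightarrow> bool" where
  "sun_E E a b k l x y \<longleftrightarrow>
     (\<exists>c < 2 * k * (l + 1).
        (x = Inl c \<and> y = Inl ((c + 1) mod (2 * k * (l + 1))))
      \<or> (y = Inl c \<and> x = Inl ((c + 1) mod (2 * k * (l + 1)))))
   \<or> (\<exists>i \<in> {1..2 * k}. \<exists>u v. E u v \<and> x = sun_emb a b k l i u \<and> y = sun_emb a b k l i v)"

end

theory Submission
  imports Defs "HOL-Number_Theory.Cong"
begin

locale sunloc =
  fixes V :: "'a set" and E :: "'a \<Rightarrow> 'a \<Rightarrow> bool" and a b :: 'a and k l :: nat
  assumes sg: "simple_graph V E" and ab: "E a b" and k2: "k \<ge> 2" and l2: "l \<ge> 2"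
    and tri: "edges_in_triangles E"
begin

definition N :: nat where "N = 2 * k * (l + 1)"
definition L :: nat where "L = l + 1"
abbreviation "VG \<equiv> sun_V V a b k l"
abbreviation "EG \<equiv> sun_E E a b k l"
abbreviation "emb \<equiv> sun_emb a b k l"

definition sc :: "nat \<Rightarrow> nat" where "sc x = (x + 1) mod N"
definition cyc :: "nat \<Rightarrow> (nat + nat \<times> 'a) set" where "cyc c = {Inl c, Inl (sc c)}"
definition CC :: "nat set" where "CC = {c. c < N \<and> c mod L \<noteq> 0}"
definition PE where "PE = cyc ` CC"

lemma Esym: "E u v \<Longrightarrow> E v u" using sg unfolding simple_graph_def by blast
lemma Eirr: "\<not> E u u" using sg unfolding simple_graph_def by blast
lemma EV: "E u v \<Longrightarrow> u \<in> V \<and> v \<in> V" using sg unfolding simple_graph_def by blast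
lemma finV: "finite V" using sg unfolding simple_graph_def by blast
lemma aV: "a \<in> V" and bV: "b \<in> V" using EV[OF ab] by auto
lemma anb: "a \<noteq> b" using ab Eirr by metis

lemma N12: "N \<ge> 12" proof -
  have "2*k \<ge> 4" using k2 by simp
  moreover have "l + 1 \<ge> 3" using l2 by simp
  ultimately have "2*k*(l+1) \<ge> 4*3" using mult_le_mono by blast
  thus ?thesis unfolding N_def by simp
qed
lemma L3: "L \<ge> 3" using l2 unfolding L_def by simp
lemma NLk: "N = 2 * k * L" unfolding N_def L_def by simp
lemma LdvdN: "L dvd N" unfolding NLk by simp
lemma Npos: "N > 0" using N12 by simp

lemma sc_lt: "sc x < N" unfolding sc_def using Npos by simp
lemma sc_modL: "sc x mod L = (x mod L + 1) mod L"
proof -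
  have "sc x mod L = (x+1) mod L" unfolding sc_def using LdvdN mod_mod_cancel by blast
  thus ?thesis by (simp add: mod_Suc_eq)
qed
lemma sc_eq: "x < N \<Longrightarrow> sc x = (if x + 1 = N then 0 else x + 1)"
  unfolding sc_def by auto
lemma sc_inj: "x < N \<Longrightarrow> y < N \<Longrightarrow> sc x = sc y \<Longrightarrow> x = y"
  using sc_eq[of x] sc_eq[of y] by (auto split: if_splits)
lemma sc_ne: "x < N \<Longrightarrow> sc x \<noteq> x"
  using sc_eq[of x] N12 by (auto split: if_splits)
lemma sc_sc_ne: "x < N \<Longrightarrow> sc (sc x) \<noteq> x"
  using sc_eq[of x] sc_eq[of "sc x"] sc_lt[of x] N12 by (auto split: if_splits)
lemma sc3_ne: "x < N \<Longrightarrow> sc (sc (sc x)) \<noteq> x"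
  using sc_eq[of x] sc_eq[of "sc x"] sc_eq[of "sc (sc x)"] sc_lt[of x] sc_lt[of "sc x"] N12 by (auto split: if_splits)

lemma emb_def2: "emb j u = (if u = a then Inl ((j * L) mod N) else if u = b then Inl (sc ((j * L) mod N)) else Inr (j, u))"
proof -
  have e: "2*k*(l+1) = N" "l+1 = L" unfolding N_def L_def by simp_all
  have "(j * L + 1) mod N = sc ((j * L) mod N)" unfolding sc_def by (metis mod_add_left_eq)
  then show ?thesis unfolding sun_emb_def e(1) unfolding e(2) by (simp only: \<open>(j * L + 1) mod N = sc ((j * L) mod N)\<close>)
qed
lemma emb_a: "emb j a = Inl ((j * L) mod N)" unfolding emb_def2 by simp
lemma emb_b: "emb j b = Inl (sc ((j * L) mod N))"
  unfolding emb_def2 using anb by simp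
lemma emb_o: "u \<noteq> a \<Longrightarrow> u \<noteq> b \<Longrightarrow> emb j u = Inr (j, u)" unfolding emb_def2 by simp

lemma jL_modL: "(j * L) mod N mod L = 0"
  using LdvdN mod_mod_cancel by (metis mod_mult_self2_is_0)
lemma jL_lt: "(j * L) mod N < N" using Npos by simp

lemma jL_inj: assumes "j \<in> {1..2*k}" "j' \<in> {1..2*k}" "(j * L) mod N = (j' * L) mod N"
  shows "j = j'"
proof -
  have "(j * L) mod N = (j mod (2*k)) * L" unfolding NLk by (simp add: mult_mod_left)
  moreover have "(j' * L) mod N = (j' mod (2*k)) * L" unfolding NLk by (simp add: mult_mod_left)
  ultimately have "j mod (2*k) = j' mod (2*k)" using assms(3) L3 by simp
  thus ?thesis using assms(1,2)
    by (metis atLeastAtMost_iff le_neq_implies_less mod_less mod_self nat_neq_iff not_one_le_zero)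
qed

lemma EG_def2: "EG x y \<longleftrightarrow> (\<exists>c<N. (x = Inl c \<and> y = Inl (sc c)) \<or> (y = Inl c \<and> x = Inl (sc c)))
   \<or> (\<exists>j \<in> {1..2*k}. \<exists>u v. E u v \<and> x = emb j u \<and> y = emb j v)"
  unfolding sun_E_def sc_def N_def by simp

lemma VG_def2: "VG = Inl ` {0..<N} \<union> {Inr (i, v) | i v. i \<in> {1..2*k} \<and> v \<in> V - {a, b}}"
  unfolding sun_V_def N_def by simp

lemma emb_in: assumes "j \<in> {1..2*k}" "u \<in> V" shows "emb j u \<in> VG"
proof -
  consider "u = a" | "u = b" | "u \<noteq> a \<and> u \<noteq> b" by blast
  then show ?thesis
  proof cases
    case 1 then show ?thesis unfolding VG_def2 by (intro UnI1) (simp add: emb_a jL_lt)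
  next
    case 2 then show ?thesis unfolding VG_def2 by (intro UnI1) (simp add: emb_b sc_lt)
  next
    case 3 then show ?thesis unfolding VG_def2 using assms by (intro UnI2) (simp add: emb_o)
  qed
qed

lemma EG_sym: "EG x y \<Longrightarrow> EG y x"
  unfolding EG_def2 using Esym by blast

lemma EG_VG: assumes "EG x y" shows "x \<in> VG \<and> y \<in> VG"
proof -
  consider (c) c where "c < N" "(x = Inl c \<and> y = Inl (sc c)) \<or> (y = Inl c \<and> x = Inl (sc c))"
    | (f) j u v where "j \<in> {1..2*k}" "E u v" "x = emb j u" "y = emb j v"
    using assms(1) unfolding EG_def2 by blast
  then show ?thesis
  proof cases
    case c
    have "Inl c \<in> VG" "Inl (sc c) \<in> VG" unfolding VG_def2 using c(1) sc_lt by auto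
    then show ?thesis using c(2) by auto
  next
    case f
    then show ?thesis using emb_in EV by simp
  qed
qed

lemma emb_root_cases: "emb j u = Inl c \<Longrightarrow> (u = a \<and> c = (j*L) mod N) \<or> (u = b \<and> c = sc ((j*L) mod N))"
  unfolding emb_def2 by (auto split: if_splits)

lemma Inl_mod: "emb j u = Inl c \<Longrightarrow> c mod L = 0 \<or> c mod L = 1"
  using emb_root_cases[of j u c] jL_modL[of j] sc_modL[of "(j*L) mod N"] L3 by auto

lemma fedge_inl: "Inl x = emb j u \<Longrightarrow> Inl y = emb j v \<Longrightarrow> E u v \<Longrightarrow> x < N \<and> y < N \<and> (y = sc x \<or> x = sc y)"
proof -
  assume f: "Inl x = emb j u" "Inl y = emb j v" "E u v"
  from f(3) have "u \<noteq> v" using Eirr by auto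
  with emb_root_cases[OF f(1)[symmetric]] emb_root_cases[OF f(2)[symmetric]] show ?thesis
    using jL_lt sc_lt by auto
qed

lemma inl_adj: "EG (Inl x) (Inl y) \<Longrightarrow> x < N \<and> y < N \<and> (y = sc x \<or> x = sc y)"
  unfolding EG_def2 using sc_lt fedge_inl by blast

lemma inl_inr: "EG (Inl c) (Inr z) \<Longrightarrow> c mod L = 0 \<or> c mod L = 1"
  unfolding EG_def2 by (metis Inl_mod Inl_Inr_False)

lemma emb_inj: assumes "j \<in> {1..2*k}" "j' \<in> {1..2*k}" "u \<in> V" "v \<in> V" "emb j u = emb j' v"
  shows "j = j' \<and> u = v"
proof (cases "emb j u")
  case (Inl c)
  have m: "sc ((j*L) mod N) mod L = 1" "sc ((j'*L) mod N) mod L = 1"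
    using sc_modL jL_modL L3 by auto
  from emb_root_cases[OF Inl] emb_root_cases[of j' v c] Inl assms(5)
  have "(u = a \<and> c = (j*L) mod N) \<or> (u = b \<and> c = sc ((j*L) mod N))"
       "(v = a \<and> c = (j'*L) mod N) \<or> (v = b \<and> c = sc ((j'*L) mod N))" by auto
  then show ?thesis using m jL_modL[of j] jL_modL[of j'] jL_inj[OF assms(1,2)]
     sc_inj[OF jL_lt[of j] jL_lt[of j']] by auto
next
  case (Inr z)
  then show ?thesis using assms(5) unfolding emb_def2 by (auto split: if_splits)
qed

lemma EG_irr: "\<not> EG x x"
proof
  assume h: "EG x x"
  consider (c) c where "c < N" "x = Inl c \<and> x = Inl (sc c)"
    | (f) j u v where "j \<in> {1..2*k}" "E u v" "x = emb j u" "x = emb j v"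
    using h unfolding EG_def2 by blast
  then show False
  proof cases
    case c then show ?thesis using sc_ne[of c] by auto
  next
    case f
    from f(2) have "u \<noteq> v" using Eirr by auto
    then show ?thesis using f emb_inj[of j j u v] EV by simp
  qed
qed

lemma root_idx: assumes "c < N" "c mod L = 0" shows "\<exists>j\<in>{1..2*k}. c = (j*L) mod N"
proof (cases "c = 0")
  case True
  then show ?thesis using k2 by (intro bexI[of _ "2*k"]) (auto simp: NLk)
next
  case False
  have c: "c = (c div L) * L" using assms(2) by (metis add.right_neutral div_mult_mod_eq)
  have "c div L \<ge> 1" using False c by (cases "c div L") auto
  moreover have "c div L < 2*k" using assms(1) unfolding NLk
    by (simp add: less_mult_imp_div_less)
  ultimately show ?thesis using assms(1) c by (intro bexI[of _ "c div L"]) auto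
qed

lemma cyc_edge: "c < N \<Longrightarrow> EG (Inl c) (Inl (sc c))"
  unfolding EG_def2 by blast

lemma cyc_inj: "c < N \<Longrightarrow> d < N \<Longrightarrow> cyc c = cyc d \<Longrightarrow> c = d"
proof -
  assume c: "c < N" "d < N" "cyc c = cyc d"
  then have "(c = d \<and> sc c = sc d) \<or> (c = sc d \<and> sc c = d)" unfolding cyc_def by (simp add: doubleton_eq_iff)
  then show "c = d" using sc_sc_ne[OF c(2)] by auto
qed

lemma cyc_PE: "c < N \<Longrightarrow> cyc c \<in> PE \<longleftrightarrow> c mod L \<noteq> 0"
  unfolding PE_def CC_def using cyc_inj by auto

lemma neg_PE: "cyc 1 \<in> PE" using cyc_PE[of 1] N12 L3 by auto

lemma PE_elem: "e \<in> PE \<Longrightarrow> \<exists>c<N. c mod L \<noteq> 0 \<and> e = {Inl c, Inl (sc c)}"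
  unfolding PE_def CC_def cyc_def by auto

lemma path_no_tri: assumes "c < N" "c mod L \<noteq> 0" "EG (Inl c) z" "EG (Inl (sc c)) z"
  shows False
proof (cases z)
  case (Inl d)
  from inl_adj[of c d] inl_adj[of "sc c" d] assms Inl
  have "d = sc c \<or> c = sc d" "d = sc (sc c) \<or> sc c = sc d" "d < N" by auto
  then consider "d = sc c" | "c = sc d" "d = sc (sc c)" | "c = sc d" "sc c = sc d" by blast
  then show ?thesis
  proof cases
    case 1 then show ?thesis using assms(4) Inl EG_irr by simp
  next
    case 2 then show ?thesis using sc3_ne[of d] \<open>d < N\<close> by simp
  next
    case 3 then have "c = d" using sc_inj[of c d] assms(1) \<open>d < N\<close> by simp
    then show ?thesis using 3 sc_ne[of c] assms(1) by simp
  qed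
next
  case (Inr y)
  have "c mod L = 1" using inl_inr[of c y] assms(2,3) Inr by auto
  hence "sc c mod L = 2" using sc_modL[of c] L3 by simp
  then show ?thesis using inl_inr[of "sc c" y] assms(4) Inr L3 by auto
qed

lemma tri_not_PE: assumes "EG x z" "EG y z" shows "{x,y} \<notin> PE"
proof
  assume "{x,y} \<in> PE"
  then obtain c where c: "c < N" "c mod L \<noteq> 0" "{x,y} = {Inl c, Inl (sc c)}" using PE_elem by blast
  then have "(x = Inl c \<and> y = Inl (sc c)) \<or> (y = Inl c \<and> x = Inl (sc c))" by (auto simp: doubleton_eq_iff)
  then show False using path_no_tri[OF c(1,2)] assms by blast
qed

lemma edge_Fedge: assumes "EG x y" "{x,y} \<notin> PE"
  shows "\<exists>j\<in>{1..2*k}. \<exists>u v. E u v \<and> x = emb j u \<and> y = emb j v"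
proof -
  consider (c) c where "c < N" "(x = Inl c \<and> y = Inl (sc c)) \<or> (y = Inl c \<and> x = Inl (sc c))"
    | (f) j u v where "j \<in> {1..2*k}" "E u v" "x = emb j u" "y = emb j v"
    using assms(1) unfolding EG_def2 by blast
  then show ?thesis
  proof cases
    case c
    have "cyc c = {x,y}" using c(2) unfolding cyc_def by auto
    hence "c mod L = 0" using cyc_PE[OF c(1)] assms(2) by auto
    then obtain j where j: "j \<in> {1..2*k}" "c = (j*L) mod N" using root_idx[OF c(1)] by auto
    have xa: "Inl c = emb j a" "Inl (sc c) = emb j b" using j emb_a emb_b by simp_all
    from c(2) show ?thesis
    proof (elim disjE conjE)
      assume "x = Inl c" "y = Inl (sc c)" then show ?thesis using xa ab j(1) by blast
    next
      assume "y = Inl c" "x = Inl (sc c)" then show ?thesis using xa Esym[OF ab] j(1) by blast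
    qed
  next
    case f
    then show ?thesis by (intro bexI[of _ j]) auto
  qed
qed

lemma fedge_EG: "j \<in> {1..2*k} \<Longrightarrow> E u v \<Longrightarrow> EG (emb j u) (emb j v)"
  unfolding EG_def2 by blast

lemma edge_tri: assumes "EG x y" "{x,y} \<notin> PE" shows "\<exists>z. EG x z \<and> EG y z"
proof -
  obtain j u v where f: "j \<in> {1..2*k}" "E u v" "x = emb j u" "y = emb j v"
    using edge_Fedge[OF assms] by blast
  obtain z where z: "E u z" "E v z" using f(2) tri unfolding edges_in_triangles_def by blast
  have "EG x (emb j z) \<and> EG y (emb j z)" unfolding f(3,4) using fedge_EG[OF f(1)] z by simp
  then show ?thesis by blast
qed

lemma tri_Fedge: assumes "EG x y" "EG x z" "EG y z"
  shows "\<exists>j\<in>{1..2*k}. \<exists>u v. E u v \<and> x = emb j u \<and> y = emb j v"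
  using edge_Fedge[OF assms(1) tri_not_PE[OF assms(2,3)]] .

definition Hm where "Hm = homs VG EG VG EG"
definition w :: "real \<Rightarrow> (nat + nat \<times> 'a) set \<Rightarrow> real" where
  "w t e = (if e = cyc 1 then - t else if e \<in> PE then t else 1)"
definition pw where "pw t \<psi> = (\<Prod>e\<in>edges EG. w t (\<psi> ` e))"

lemma hom_EG: "\<psi> \<in> Hm \<Longrightarrow> EG x y \<Longrightarrow> EG (\<psi> x) (\<psi> y)"
  unfolding Hm_def homs_def by blast

lemma hom_VG: "\<psi> \<in> Hm \<Longrightarrow> x \<in> VG \<Longrightarrow> \<psi> x \<in> VG"
  unfolding Hm_def homs_def by auto

lemma hom_notPE: assumes "\<psi> \<in> Hm" "EG x y" "{x,y} \<notin> PE" shows "{\<psi> x, \<psi> y} \<notin> PE"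
proof -
  obtain z where z: "EG x z" "EG y z" using edge_tri[OF assms(2,3)] by blast
  show ?thesis using tri_not_PE[OF hom_EG[OF assms(1) z(1)] hom_EG[OF assms(1) z(2)]] .
qed

lemma finVG: "finite VG"
proof -
  have sub: "{Inr (i, v) | i v. i \<in> {1..2*k} \<and> v \<in> V - {a, b}} \<subseteq> (Inr ` ({1..2*k} \<times> V) :: (nat + nat \<times> 'a) set)"
    by blast
  have f1: "finite (Inr ` ({1..2*k} \<times> V) :: (nat + nat \<times> 'a) set)" using finV by blast
  have f2: "finite ({Inr (i, v) | i v. i \<in> {1..2*k} \<and> v \<in> V - {a, b}} :: (nat + nat \<times> 'a) set)"
    by (rule finite_subset[OF sub f1])
  have f3: "finite (Inl ` {0..<N} :: (nat + nat \<times> 'a) set)" by blast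
  show ?thesis unfolding VG_def2 using f2 f3 by (rule finite_UnI[rotated])
qed

lemma finPE: "finite PE" unfolding PE_def CC_def by simp

lemma PE_sub: "PE \<subseteq> edges EG"
  unfolding PE_def CC_def edges_def cyc_def using cyc_edge by blast

lemma fin_edges: "finite (edges EG)"
proof -
  have "edges EG \<subseteq> (\<lambda>(x,y). {x,y}) ` (VG \<times> VG)" unfolding edges_def using EG_VG by fastforce
  then show ?thesis using finVG finite_subset by blast
qed

lemma finHm: "finite Hm"
proof -
  have "Hm \<subseteq> VG \<rightarrow>\<^sub>E VG" unfolding Hm_def homs_def by blast
  then show ?thesis using finite_PiE[OF finVG, of "\<lambda>_. VG"] finVG finite_subset by blast
qed

lemma prod_reduce: assumes "\<psi> \<in> Hm" shows "pw t \<psi> = (\<Prod>e\<in>PE. w t (\<psi> ` e))"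
proof -
  have "pw t \<psi> = (\<Prod>e\<in>edges EG - PE. w t (\<psi> ` e)) * (\<Prod>e\<in>PE. w t (\<psi> ` e))"
    unfolding pw_def using prod.subset_diff[OF PE_sub fin_edges] by blast
  moreover have "(\<Prod>e\<in>edges EG - PE. w t (\<psi> ` e)) = 1"
  proof (rule prod.neutral, rule ballI)
    fix e assume e: "e \<in> edges EG - PE"
    then obtain x y where xy: "e = {x,y}" "EG x y" unfolding edges_def by blast
    have "\<psi> ` e \<notin> PE" using hom_notPE[OF assms xy(2)] e xy(1) by simp
    then show "w t (\<psi> ` e) = 1" unfolding w_def using neg_PE by auto
  qed
  ultimately show ?thesis by simp
qed

lemma nontop: assumes "1 \<le> t" "\<psi> \<in> Hm" "e1 \<in> PE" "\<psi> ` e1 \<notin> PE"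
  shows "(\<Prod>e\<in>PE. w t (\<psi> ` e)) \<le> t ^ (card PE - 1)"
proof -
  have "(\<Prod>e\<in>PE. w t (\<psi> ` e)) \<le> \<bar>\<Prod>e\<in>PE. w t (\<psi> ` e)\<bar>" by simp
  also have "\<dots> = (\<Prod>e\<in>PE. \<bar>w t (\<psi> ` e)\<bar>)" by (simp add: abs_prod)
  also have "\<dots> = \<bar>w t (\<psi> ` e1)\<bar> * (\<Prod>e\<in>PE - {e1}. \<bar>w t (\<psi> ` e)\<bar>)"
    using prod.remove[OF finPE assms(3)] by simp
  also have "\<bar>w t (\<psi> ` e1)\<bar> = 1" using assms(4) neg_PE unfolding w_def by auto
  also have "(\<Prod>e\<in>PE - {e1}. \<bar>w t (\<psi> ` e)\<bar>) \<le> t ^ (card PE - 1)"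
  proof (rule prod_le_power)
    show "\<And>i. i \<in> PE - {e1} \<Longrightarrow> 0 \<le> \<bar>w t (\<psi> ` i)\<bar> \<and> \<bar>w t (\<psi> ` i)\<bar> \<le> t"
      using assms(1) unfolding w_def by auto
    show "card (PE - {e1}) \<le> card PE - 1" using card_Diff_singleton[OF assms(3)] by simp
    show "1 \<le> t" by fact
  qed
  finally show ?thesis by simp
qed

lemma id_Hm: "restrict id VG \<in> Hm"
  unfolding Hm_def homs_def using EG_VG by auto

lemma id_top: "\<forall>e\<in>PE. restrict id VG ` e \<in> PE"
proof
  fix e assume "e \<in> PE"
  then have "e \<subseteq> VG" using PE_sub EG_VG unfolding edges_def by blast
  then have "restrict id VG ` e = e" by (auto simp: restrict_def)
  then show "restrict id VG ` e \<in> PE" using \<open>e \<in> PE\<close> by simp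
qed

lemma sum_neg:
  assumes top: "\<And>\<psi> t. \<psi> \<in> Hm \<Longrightarrow> (\<forall>e\<in>PE. \<psi> ` e \<in> PE) \<Longrightarrow> (\<Prod>e\<in>PE. w t (\<psi> ` e)) = - (t ^ card PE)"
  shows "(\<Sum>\<psi>\<in>Hm. pw (real (card Hm)) \<psi>) < 0"
proof -
  define t where "t = real (card Hm)"
  define P where "P = card PE"
  have "card Hm > 0" using id_Hm finHm card_gt_0_iff by blast
  hence M1: "card Hm \<ge> 1" by simp
  hence t1: "t \<ge> 1" unfolding t_def by simp
  have "card PE > 0" using neg_PE finPE card_gt_0_iff by blast
  hence P1: "P \<ge> 1" unfolding P_def by simp
  have bnd: "pw t \<psi> \<le> t ^ (P - 1)" if "\<psi> \<in> Hm" for \<psi>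
  proof (cases "\<forall>e\<in>PE. \<psi> ` e \<in> PE")
    case True
    then have "pw t \<psi> = - (t ^ P)" using top[OF that] prod_reduce[OF that] unfolding P_def by simp
    also have "\<dots> \<le> 0" using t1 by simp
    also have "0 \<le> t ^ (P - 1)" using t1 by simp
    finally show ?thesis .
  next
    case False
    then obtain e1 where "e1 \<in> PE" "\<psi> ` e1 \<notin> PE" by blast
    then show ?thesis using nontop[OF t1 that] prod_reduce[OF that] unfolding P_def by simp
  qed
  have "(\<Sum>\<psi>\<in>Hm. pw t \<psi>) = pw t (restrict id VG) + (\<Sum>\<psi>\<in>Hm - {restrict id VG}. pw t \<psi>)"
    using sum.remove[OF finHm id_Hm] by simp
  also have "pw t (restrict id VG) = - (t ^ P)"
    using top[OF id_Hm id_top] prod_reduce[OF id_Hm] unfolding P_def by simp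
  also have "(\<Sum>\<psi>\<in>Hm - {restrict id VG}. pw t \<psi>) \<le> of_nat (card (Hm - {restrict id VG})) * t ^ (P - 1)"
    by (rule sum_bounded_above) (use bnd in auto)
  also have "card (Hm - {restrict id VG}) = card Hm - 1" using card_Diff_singleton[OF id_Hm] by simp
  also have "real (card Hm - 1) = t - 1" unfolding t_def using M1 by simp
  also have "t ^ P = t * t ^ (P - 1)" using P1 by (simp add: power_eq_if)
  finally have "(\<Sum>\<psi>\<in>Hm. pw t \<psi>) \<le> - (t ^ (P - 1))" by (simp add: algebra_simps)
  also have "\<dots> < 0" using t1 by simp
  finally show ?thesis by (simp add: t_def)
qed


definition pos :: "nat \<Rightarrow> nat" where "pos y = (if y mod L = 0 then L else y mod L)"

lemma pos_sc: "y mod L \<noteq> 0 \<Longrightarrow> pos (sc y) = pos y + 1"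
proof -
  assume h: "y mod L \<noteq> 0"
  have lt: "y mod L < L" using L3 by simp
  show ?thesis
  proof (cases "y mod L + 1 < L")
    case True
    then have "sc y mod L = y mod L + 1" using sc_modL[of y] by simp
    then show ?thesis unfolding pos_def using h by simp
  next
    case False
    then have "y mod L + 1 = L" using lt by simp
    then have "sc y mod L = 0" using sc_modL[of y] by simp
    then show ?thesis unfolding pos_def using h \<open>y mod L + 1 = L\<close> by simp
  qed
qed

lemma pos_sc0: "y mod L = 0 \<Longrightarrow> pos (sc y) = 1"
  using sc_modL[of y] L3 unfolding pos_def by simp

lemma pos0: "y mod L = 0 \<Longrightarrow> pos y = L" unfolding pos_def by simp

lemma sc_mod0_pred: "sc y mod L = 0 \<Longrightarrow> y mod L \<noteq> 0"
proof
  assume h: "sc y mod L = 0" "y mod L = 0"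
  then have "sc y mod L = 1" using sc_modL[of y] L3 by simp
  with h show False by simp
qed

lemma walk_int:
  fixes f :: "nat \<Rightarrow> int"
  assumes "\<forall>j<n. f (Suc j) = f j + 1 \<or> f (Suc j) = f j - 1"
  shows "f n \<le> f 0 + int n \<and> even (f 0 + int n - f n) \<and> (f n = f 0 + int n \<longrightarrow> (\<forall>j<n. f (Suc j) = f j + 1))"
  using assms
proof (induction n)
  case 0 then show ?case by simp
next
  case (Suc n)
  then have IH: "f n \<le> f 0 + int n" "even (f 0 + int n - f n)"
     "f n = f 0 + int n \<longrightarrow> (\<forall>j<n. f (Suc j) = f j + 1)" by auto
  have st: "f (Suc n) = f n + 1 \<or> f (Suc n) = f n - 1" using Suc.prems by simp
  show ?case
  proof (intro conjI impI)
    show "f (Suc n) \<le> f 0 + int (Suc n)" using IH(1) st by auto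
    show "even (f 0 + int (Suc n) - f (Suc n))"
    proof -
      obtain m where m: "f 0 + int n - f n = 2 * m" using IH(2) by (elim evenE)
      have "f 0 + int (Suc n) - f (Suc n) = 2 * m \<or>
            f 0 + int (Suc n) - f (Suc n) = 2 * (m + 1)" using st m by auto
      then show ?thesis by (metis dvd_triv_left)
    qed
    assume eq: "f (Suc n) = f 0 + int (Suc n)"
    then have "f (Suc n) = f n + 1" "f n = f 0 + int n" using IH(1) st by auto
    then show "\<forall>j<Suc n. f (Suc j) = f j + 1" using IH(3) less_Suc_eq by auto
  qed
qed

lemma walk_seg:
  fixes f :: "nat \<Rightarrow> int"
  assumes "\<forall>j<n. f (Suc j) = f j + 1 \<or> f (Suc j) = f j - 1"
    and "f n = f 0 + int n \<or> f n = f 0"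
    and "odd n \<or> f n = f 0 + int n"
  shows "f n = f 0 + int n \<and> (\<forall>j<n. f (Suc j) = f j + 1)"
proof -
  have w: "f n \<le> f 0 + int n" "even (f 0 + int n - f n)"
     "f n = f 0 + int n \<longrightarrow> (\<forall>j<n. f (Suc j) = f j + 1)" using walk_int[OF assms(1)] by auto
  have "f n = f 0 + int n"
  proof (cases "f n = f 0")
    case True
    then have "even (int n)" using w(2) by simp
    then have "even n" by simp
    then show ?thesis using assms(3) by simp
  next
    case False then show ?thesis using assms(2) by simp
  qed
  then show ?thesis using w(3) by simp
qed

definition good :: "(nat \<Rightarrow> nat) \<Rightarrow> bool" where
  "good \<pi> \<longleftrightarrow> (\<forall>c<N. \<pi> c < N) \<and>
     (\<forall>c<N. c mod L = 0 \<longrightarrow> (\<pi> (sc c) = sc (\<pi> c) \<and> \<pi> c mod L = 0) \<or> (\<pi> c = sc (\<pi> (sc c)) \<and> \<pi> (sc c) mod L = 0)) \<and>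
     (\<forall>c<N. c mod L \<noteq> 0 \<longrightarrow> (\<pi> (sc c) = sc (\<pi> c) \<and> \<pi> c mod L \<noteq> 0) \<or> (\<pi> c = sc (\<pi> (sc c)) \<and> \<pi> (sc c) mod L \<noteq> 0))"

lemma good_lt: assumes "good \<pi>" "c < N" shows "\<pi> c < N"
proof -
  have "\<forall>c<N. \<pi> c < N" using assms(1) unfolding good_def by (rule conjunct1)
  then show ?thesis using assms(2) by (elim allE impE)
qed
lemma good_root: assumes "good \<pi>" "c < N" "c mod L = 0" shows
   "(\<pi> (sc c) = sc (\<pi> c) \<and> \<pi> c mod L = 0) \<or> (\<pi> c = sc (\<pi> (sc c)) \<and> \<pi> (sc c) mod L = 0)"
proof -
  have "\<forall>c<N. c mod L = 0 \<longrightarrow> (\<pi> (sc c) = sc (\<pi> c) \<and> \<pi> c mod L = 0) \<or> (\<pi> c = sc (\<pi> (sc c)) \<and> \<pi> (sc c) mod L = 0)"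
    using assms(1) unfolding good_def by (elim conjE)
  then show ?thesis using assms(2,3) by (elim allE impE)
qed
lemma good_path: assumes "good \<pi>" "c < N" "c mod L \<noteq> 0" shows
   "(\<pi> (sc c) = sc (\<pi> c) \<and> \<pi> c mod L \<noteq> 0) \<or> (\<pi> c = sc (\<pi> (sc c)) \<and> \<pi> (sc c) mod L \<noteq> 0)"
proof -
  have "\<forall>c<N. c mod L \<noteq> 0 \<longrightarrow> (\<pi> (sc c) = sc (\<pi> c) \<and> \<pi> c mod L \<noteq> 0) \<or> (\<pi> c = sc (\<pi> (sc c)) \<and> \<pi> (sc c) mod L \<noteq> 0)"
    using assms(1) unfolding good_def by (elim conjE)
  then show ?thesis using assms(2,3) by (elim allE impE)
qed

lemma fw_bw_excl: assumes "good \<pi>" "c < N" "\<pi> (sc c) = sc (\<pi> c)" "\<pi> c = sc (\<pi> (sc c))" shows False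
proof -
  have "\<pi> c = sc (sc (\<pi> c))" using assms(3,4) by simp
  then show False using sc_sc_ne[OF good_lt[OF assms(1,2)]] by simp
qed

lemma iL_lt: "i < 2*k \<Longrightarrow> j \<le> l \<Longrightarrow> i * L + j < N"
proof -
  assume "i < 2*k" "j \<le> l"
  then have "Suc i \<le> 2*k" by simp
  then have "Suc i * L \<le> 2*k*L" by (rule mult_right_mono) simp
  then show ?thesis using \<open>j \<le> l\<close> unfolding NLk L_def by simp
qed

lemma iL_mod: "j < L \<Longrightarrow> (i * L + j) mod L = j" by simp

lemma sc_end: "sc (i * L + l) mod L = 0"
proof -
  have e: "l + 1 = L" "l < L" by (simp_all add: L_def)
  have "(i * L + l) mod L = l" using iL_mod[OF e(2)] .
  then show ?thesis using sc_modL[of "i*L+l"] e(1) by simp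
qed

lemma sc_mid: "i < 2*k \<Longrightarrow> j < l \<Longrightarrow> sc (i * L + j) = i * L + Suc j"
  using sc_eq[of "i*L+j"] iL_lt[of i "Suc j"] by auto

lemma seg_steps:
  assumes g: "good \<pi>" and i: "i < 2*k" and j: "j < l"
  defines "c \<equiv> i * L + Suc j"
  shows "(\<pi> (sc c) = sc (\<pi> c) \<and> int (pos (\<pi> (sc c))) = int (pos (\<pi> c)) + 1)
       \<or> (\<pi> c = sc (\<pi> (sc c)) \<and> int (pos (\<pi> (sc c))) = int (pos (\<pi> c)) - 1)"
proof -
  have cN: "c < N" unfolding c_def using iL_lt[OF i, of "Suc j"] j by simp
  have "Suc j < L" using j unfolding L_def by simp
  then have cm: "c mod L \<noteq> 0" unfolding c_def using iL_mod by simp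
  have "(\<pi> (sc c) = sc (\<pi> c) \<and> \<pi> c mod L \<noteq> 0) \<or> (\<pi> c = sc (\<pi> (sc c)) \<and> \<pi> (sc c) mod L \<noteq> 0)"
    using good_path[OF g cN cm] .
  then show ?thesis using pos_sc by auto
qed

lemma segment_fw:
  assumes g: "good \<pi>" and i: "i < 2*k"
    and fw0: "\<pi> (sc (i*L)) = sc (\<pi> (i*L))" and h: "odd l \<or> \<pi> (sc (sc (i*L+l))) = sc (\<pi> (sc (i*L+l)))"
  shows "\<pi> (sc (sc (i*L+l))) = sc (\<pi> (sc (i*L+l))) \<and> (\<forall>j. 1 \<le> j \<and> j \<le> l \<longrightarrow> \<pi> (sc (i*L+j)) = sc (\<pi> (i*L+j)))"
proof -
  define c0 where "c0 = i * L"
  define c' where "c' = sc (c0 + l)"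
  have c0N: "c0 < N" unfolding c0_def using iL_lt[OF i, of 0] by simp
  have c0m: "c0 mod L = 0" unfolding c0_def by simp
  have c'N: "c' < N" unfolding c'_def using sc_lt by simp
  have c'm: "c' mod L = 0" unfolding c'_def c0_def using sc_end by simp
  have root0: "(\<pi> (sc c0) = sc (\<pi> c0) \<and> \<pi> c0 mod L = 0) \<or> (\<pi> c0 = sc (\<pi> (sc c0)) \<and> \<pi> (sc c0) mod L = 0)"
    using good_root[OF g c0N c0m] .
  have root': "(\<pi> (sc c') = sc (\<pi> c') \<and> \<pi> c' mod L = 0) \<or> (\<pi> c' = sc (\<pi> (sc c')) \<and> \<pi> (sc c') mod L = 0)"
    using good_root[OF g c'N c'm] .
  define f where "f j = int (pos (\<pi> (sc (c0 + j))))" for j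
  have fl: "f l = int (pos (\<pi> c'))" unfolding f_def c'_def by simp
  have steps: "(\<pi> (sc (c0 + Suc j)) = sc (\<pi> (c0 + Suc j)) \<and> f (Suc j) = f j + 1)
       \<or> (\<pi> (c0 + Suc j) = sc (\<pi> (sc (c0 + Suc j))) \<and> f (Suc j) = f j - 1)" if "j < l" for j
    using seg_steps[OF g i that] sc_mid[OF i that] unfolding f_def c0_def by simp
  have excl: "\<not> (\<pi> (sc c) = sc (\<pi> c) \<and> \<pi> c = sc (\<pi> (sc c)))" if "c < N" for c
    using fw_bw_excl[OF g that] by blast
  have cjN: "c0 + Suc j < N" if "j < l" for j unfolding c0_def using iL_lt[OF i, of "Suc j"] that by simp
  have "\<pi> c0 mod L = 0" using root0 fw0 excl[OF c0N] unfolding c0_def by auto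
  then have f0: "f 0 = 1" unfolding f_def using fw0 pos_sc0 unfolding c0_def by simp
  have fend: "f l = f 0 + int l \<or> f l = f 0"
  proof (cases "\<pi> (sc c') = sc (\<pi> c')")
    case True
    then have "\<pi> c' mod L = 0" using root' excl[OF c'N] by auto
    then show ?thesis using fl f0 pos0 unfolding L_def by simp
  next
    case False
    then have "\<pi> c' = sc (\<pi> (sc c'))" "\<pi> (sc c') mod L = 0" using root' by auto
    then have "pos (\<pi> c') = 1" using pos_sc0 by simp
    then show ?thesis using fl f0 by simp
  qed
  have h': "odd l \<or> f l = f 0 + int l"
  proof (cases "odd l")
    case False
    then have fwc': "\<pi> (sc c') = sc (\<pi> c')" using h unfolding c'_def c0_def by simp
    then have "\<pi> c' mod L = 0" using root' excl[OF c'N] by auto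
    then show ?thesis using fl f0 pos0 unfolding L_def by simp
  qed simp
  have st: "\<forall>j<l. f (Suc j) = f j + 1 \<or> f (Suc j) = f j - 1" using steps by blast
  have W: "f l = f 0 + int l" "\<forall>j<l. f (Suc j) = f j + 1" using walk_seg[OF st fend h'] by auto
  have "\<pi> (sc c') = sc (\<pi> c')"
  proof (rule ccontr)
    assume "\<pi> (sc c') \<noteq> sc (\<pi> c')"
    then have "\<pi> c' = sc (\<pi> (sc c'))" "\<pi> (sc c') mod L = 0" using root' by auto
    then have "pos (\<pi> c') = 1" using pos_sc0 by simp
    then show False using W(1) fl f0 l2 by simp
  qed
  moreover have "\<pi> (sc (i*L+j)) = sc (\<pi> (i*L+j))" if j1: "1 \<le> j" "j \<le> l" for j
  proof -
    obtain j' where j': "j = Suc j'" "j' < l" using j1 by (cases j) auto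
    show ?thesis using steps[OF j'(2)] W(2) j'(2) unfolding j'(1) c0_def by force
  qed
  ultimately show ?thesis unfolding c'_def c0_def by blast
qed

lemma segment_bw:
  assumes g: "good \<pi>" and i: "i < 2*k"
    and bw0: "\<pi> (i*L) = sc (\<pi> (sc (i*L)))" and h: "odd l \<or> \<pi> (sc (i*L+l)) = sc (\<pi> (sc (sc (i*L+l))))"
  shows "\<pi> (sc (i*L+l)) = sc (\<pi> (sc (sc (i*L+l)))) \<and> (\<forall>j. 1 \<le> j \<and> j \<le> l \<longrightarrow> \<pi> (i*L+j) = sc (\<pi> (sc (i*L+j))))"
proof -
  define c0 where "c0 = i * L"
  define c' where "c' = sc (c0 + l)"
  have c0N: "c0 < N" unfolding c0_def using iL_lt[OF i, of 0] by simp
  have c0m: "c0 mod L = 0" unfolding c0_def by simp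
  have c'N: "c' < N" unfolding c'_def using sc_lt by simp
  have c'm: "c' mod L = 0" unfolding c'_def c0_def using sc_end by simp
  have root0: "(\<pi> (sc c0) = sc (\<pi> c0) \<and> \<pi> c0 mod L = 0) \<or> (\<pi> c0 = sc (\<pi> (sc c0)) \<and> \<pi> (sc c0) mod L = 0)"
    using good_root[OF g c0N c0m] .
  have root': "(\<pi> (sc c') = sc (\<pi> c') \<and> \<pi> c' mod L = 0) \<or> (\<pi> c' = sc (\<pi> (sc c')) \<and> \<pi> (sc c') mod L = 0)"
    using good_root[OF g c'N c'm] .
  define f where "f j = int (pos (\<pi> (sc (c0 + j))))" for j
  have fl: "f l = int (pos (\<pi> c'))" unfolding f_def c'_def by simp
  have steps: "(\<pi> (sc (c0 + Suc j)) = sc (\<pi> (c0 + Suc j)) \<and> f (Suc j) = f j + 1)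
       \<or> (\<pi> (c0 + Suc j) = sc (\<pi> (sc (c0 + Suc j))) \<and> f (Suc j) = f j - 1)" if "j < l" for j
    using seg_steps[OF g i that] sc_mid[OF i that] unfolding f_def c0_def by simp
  have excl: "\<not> (\<pi> (sc c) = sc (\<pi> c) \<and> \<pi> c = sc (\<pi> (sc c)))" if "c < N" for c
    using fw_bw_excl[OF g that] by blast
  have cjN: "c0 + Suc j < N" if "j < l" for j unfolding c0_def using iL_lt[OF i, of "Suc j"] that by simp
  define g' where "g' j = - f j" for j
  have "\<pi> (sc c0) mod L = 0" using root0 bw0 excl[OF c0N] unfolding c0_def by auto
  then have f0: "g' 0 = - int L" unfolding g'_def f_def using pos0 by simp
  have fend: "g' l = g' 0 + int l \<or> g' l = g' 0"
  proof (cases "\<pi> (sc c') = sc (\<pi> c')")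
    case True
    then have "\<pi> c' mod L = 0" using root' excl[OF c'N] by auto
    then show ?thesis using fl f0 pos0 unfolding g'_def by simp
  next
    case False
    then have "\<pi> c' = sc (\<pi> (sc c'))" "\<pi> (sc c') mod L = 0" using root' by auto
    then have "pos (\<pi> c') = 1" using pos_sc0 by simp
    then show ?thesis using fl f0 unfolding g'_def L_def by simp
  qed
  have h': "odd l \<or> g' l = g' 0 + int l"
  proof (cases "odd l")
    case False
    then have bwc': "\<pi> c' = sc (\<pi> (sc c'))" using h unfolding c'_def c0_def by simp
    then have "\<pi> (sc c') mod L = 0" using root' excl[OF c'N] by auto
    then have "pos (\<pi> c') = 1" using bwc' pos_sc0 by simp
    then show ?thesis using fl f0 unfolding g'_def L_def by simp
  qed simp
  have st: "\<forall>j<l. g' (Suc j) = g' j + 1 \<or> g' (Suc j) = g' j - 1" using steps unfolding g'_def by fastforce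
  have W: "g' l = g' 0 + int l" "\<forall>j<l. g' (Suc j) = g' j + 1" using walk_seg[OF st fend h'] by auto
  have "\<pi> c' = sc (\<pi> (sc c'))"
  proof (rule ccontr)
    assume "\<pi> c' \<noteq> sc (\<pi> (sc c'))"
    then have "\<pi> (sc c') = sc (\<pi> c')" "\<pi> c' mod L = 0" using root' by auto
    then have "pos (\<pi> c') = L" using pos0 by simp
    then show False using W(1) fl f0 l2 unfolding g'_def by simp
  qed
  moreover have "\<pi> (i*L+j) = sc (\<pi> (sc (i*L+j)))" if j1: "1 \<le> j" "j \<le> l" for j
  proof -
    obtain j' where j': "j = Suc j'" "j' < l" using j1 by (cases j) auto
    show ?thesis using steps[OF j'(2)] W(2) j'(2) unfolding j'(1) c0_def g'_def by force
  qed
  ultimately show ?thesis unfolding c'_def c0_def by blast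
qed


lemma sc_seg: assumes "Suc i < 2*k" shows "sc (i*L + l) = Suc i * L"
proof -
  have e: "i * L + l + 1 = Suc i * L" unfolding L_def by simp
  have lt: "Suc i * L < N" using iL_lt[OF assms, of 0] by simp
  have x: "i * L + l < N" using iL_lt[of i l] assms by simp
  have ne: "i * L + l + 1 \<noteq> N" using e lt by linarith
  have "sc (i*L + l) = i * L + l + 1" using sc_eq[OF x] ne by simp
  then show ?thesis using e by simp
qed

lemma seg_induct:
  assumes Q0: "Q 0"
    and step: "\<And>i. i < 2*k \<Longrightarrow> Q (i*L) \<Longrightarrow> Q (sc (i*L+l)) \<and> (\<forall>j. 1 \<le> j \<and> j \<le> l \<longrightarrow> Q (i*L+j))"
    and c: "c < N"
  shows "Q c"
proof -
  have roots: "\<forall>i<2*k. Q (i*L)"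
  proof (intro allI impI)
    fix i assume "i < 2*k"
    then show "Q (i*L)"
    proof (induction i)
      case 0 then show ?case using Q0 by simp
    next
      case (Suc i)
      then have "i < 2*k" by simp
      have "Q (sc (i*L+l))" using conjunct1[OF step[OF \<open>i < 2*k\<close> Suc.IH[OF \<open>i < 2*k\<close>]]] .
      then show ?case using sc_seg[OF Suc.prems] by simp
    qed
  qed
  define i where "i = c div L"
  define j where "j = c mod L"
  have cij: "c = i * L + j" unfolding i_def j_def by simp
  have i2k: "i < 2*k" unfolding i_def using c unfolding NLk by (simp add: less_mult_imp_div_less)
  show ?thesis
  proof (cases "j = 0")
    case True then show ?thesis using roots i2k cij by simp
  next
    case False
    have "j < L" unfolding j_def using L3 by simp
    then have "1 \<le> j \<and> j \<le> l" using False unfolding L_def by simp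
    moreover have "Q (i*L)" using roots i2k by blast
    ultimately show ?thesis using conjunct2[OF step[OF i2k \<open>Q (i*L)\<close>]] cij by simp
  qed
qed

lemma all_dir:
  assumes g: "good \<pi>" and h: "odd l \<or> (\<forall>c<N. c mod L = 0 \<longrightarrow> \<pi> (sc c) = sc (\<pi> c))"
  shows "(\<forall>c<N. \<pi> (sc c) = sc (\<pi> c)) \<or> (\<forall>c<N. \<pi> c = sc (\<pi> (sc c)))"
proof -
  have N0: "0 < N" using Npos .
  have r0: "\<pi> (sc 0) = sc (\<pi> 0) \<or> \<pi> 0 = sc (\<pi> (sc 0))" using good_root[OF g N0] by (simp only: mod_0) fast
  have endN: "sc (i*L+l) < N" "sc (i*L+l) mod L = 0" for i using sc_lt sc_end by auto
  show ?thesis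
  proof (cases "\<pi> (sc 0) = sc (\<pi> 0)")
    case True
    have "\<forall>c<N. \<pi> (sc c) = sc (\<pi> c)"
    proof (intro allI impI)
      fix c assume "c < N"
      show "\<pi> (sc c) = sc (\<pi> c)"
      proof (rule seg_induct[where Q = "\<lambda>c. \<pi> (sc c) = sc (\<pi> c)", OF True _ \<open>c < N\<close>])
        fix i assume i: "i < 2*k" "\<pi> (sc (i*L)) = sc (\<pi> (i*L))"
        have "odd l \<or> \<pi> (sc (sc (i*L+l))) = sc (\<pi> (sc (i*L+l)))"
        proof (cases "odd l")
          case False
          then have "\<forall>c<N. c mod L = 0 \<longrightarrow> \<pi> (sc c) = sc (\<pi> c)" using h by simp
          then show ?thesis using endN[of i] by simp
        qed simp
        then show "\<pi> (sc (sc (i*L+l))) = sc (\<pi> (sc (i*L+l))) \<and> (\<forall>j. 1 \<le> j \<and> j \<le> l \<longrightarrow> \<pi> (sc (i*L+j)) = sc (\<pi> (i*L+j)))"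
          by (rule segment_fw[OF g i(1) i(2)])
      qed
    qed
    then show ?thesis by blast
  next
    case False
    then have bw0: "\<pi> 0 = sc (\<pi> (sc 0))" using r0 by blast
    have ol: "odd l"
    proof (rule ccontr)
      assume "\<not> odd l"
      then have "\<forall>c<N. c mod L = 0 \<longrightarrow> \<pi> (sc c) = sc (\<pi> c)" using h by simp
      then have "\<pi> (sc 0) = sc (\<pi> 0)" using N0 by simp
      then show False using False by simp
    qed
    have "\<forall>c<N. \<pi> c = sc (\<pi> (sc c))"
    proof (intro allI impI)
      fix c assume "c < N"
      show "\<pi> c = sc (\<pi> (sc c))"
      proof (rule seg_induct[where Q = "\<lambda>c. \<pi> c = sc (\<pi> (sc c))", OF bw0 _ \<open>c < N\<close>])
        fix i assume i: "i < 2*k" "\<pi> (i*L) = sc (\<pi> (sc (i*L)))"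
        show "\<pi> (sc (i*L+l)) = sc (\<pi> (sc (sc (i*L+l)))) \<and> (\<forall>j. 1 \<le> j \<and> j \<le> l \<longrightarrow> \<pi> (i*L+j) = sc (\<pi> (sc (i*L+j))))"
          using segment_bw[OF g i(1) i(2)] ol by simp
      qed
    qed
    then show ?thesis by blast
  qed
qed

lemma fw_formula: assumes g: "good \<pi>" and fw: "\<forall>c<N. \<pi> (sc c) = sc (\<pi> c)"
  shows "c < N \<Longrightarrow> \<pi> c = (\<pi> 0 + c) mod N"
proof (induction c)
  case 0 then show ?case using good_lt[OF g Npos] by simp
next
  case (Suc c)
  then have cN: "c < N" by simp
  have "sc c = Suc c" using sc_eq[OF cN] Suc.prems by simp
  then have "\<pi> (Suc c) = sc (\<pi> c)" using fw[rule_format, OF cN] by simp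
  also have "\<dots> = ((\<pi> 0 + c) mod N + 1) mod N" using Suc.IH[OF cN] unfolding sc_def by simp
  also have "\<dots> = (\<pi> 0 + Suc c) mod N" by (simp add: mod_Suc_eq)
  finally show ?case .
qed

lemma bw_formula: assumes g: "good \<pi>" and bw: "\<forall>c<N. \<pi> c = sc (\<pi> (sc c))"
  shows "c < N \<Longrightarrow> \<pi> c = (\<pi> 0 + (N - c)) mod N"
proof (induction c)
  case 0 then show ?case using good_lt[OF g Npos] by simp
next
  case (Suc c)
  then have cN: "c < N" by simp
  have scc: "sc c = Suc c" using sc_eq[OF cN] Suc.prems by simp
  have "sc (\<pi> (Suc c)) = \<pi> c" using bw[rule_format, OF cN] scc by simp
  also have "\<dots> = (\<pi> 0 + (N - c)) mod N" using Suc.IH[OF cN] .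
  also have "\<dots> = sc ((\<pi> 0 + (N - Suc c)) mod N)"
  proof -
    have "\<pi> 0 + (N - c) = Suc (\<pi> 0 + (N - Suc c))" using Suc.prems by simp
    then show ?thesis unfolding sc_def by (simp add: mod_Suc_eq)
  qed
  finally have "sc (\<pi> (Suc c)) = sc ((\<pi> 0 + (N - Suc c)) mod N)" .
  then show ?case using sc_inj[OF good_lt[OF g Suc.prems], of "(\<pi> 0 + (N - Suc c)) mod N"] Npos by simp
qed

lemma mod_cancel_lt: assumes "x < N" "y < N" "(p + x) mod N = (p + y) mod N" shows "x = y"
proof -
  have "[p + x = p + y] (mod N)" using assms(3) unfolding cong_def .
  then have "[x = y] (mod N)" by (simp add: cong_add_lcancel_nat)
  then show ?thesis using assms(1,2) unfolding cong_def by simp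
qed

lemma fw_inj: assumes g: "good \<pi>" and fw: "\<forall>c<N. \<pi> (sc c) = sc (\<pi> c)"
  shows "inj_on \<pi> {0..<N}"
proof
  fix x y assume x: "x \<in> {0..<N}" and y: "y \<in> {0..<N}" and e: "\<pi> x = \<pi> y"
  have px: "\<pi> x = (\<pi> 0 + x) mod N" using fw_formula[OF g fw, of x] x by simp
  have py: "\<pi> y = (\<pi> 0 + y) mod N" using fw_formula[OF g fw, of y] y by simp
  have "(\<pi> 0 + x) mod N = (\<pi> 0 + y) mod N" using e unfolding px py .
  then show "x = y" using mod_cancel_lt[of x y "\<pi> 0"] x y by simp
qed

lemma bw_inj: assumes g: "good \<pi>" and bw: "\<forall>c<N. \<pi> c = sc (\<pi> (sc c))"
  shows "inj_on \<pi> {0..<N}"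
proof
  fix x y assume x: "x \<in> {0..<N}" and y: "y \<in> {0..<N}" and e: "\<pi> x = \<pi> y"
  have px: "\<pi> x = (\<pi> 0 + (N - x)) mod N" using bw_formula[OF g bw, of x] x by simp
  have py: "\<pi> y = (\<pi> 0 + (N - y)) mod N" using bw_formula[OF g bw, of y] y by simp
  have "(\<pi> 0 + (N - x)) mod N = (\<pi> 0 + (N - y)) mod N" using e px py by simp
  then have "[\<pi> 0 + (N - x) = \<pi> 0 + (N - y)] (mod N)" unfolding cong_def .
  then have "[N - x = N - y] (mod N)" using cong_add_lcancel_nat by blast
  then have "(N - x) mod N = (N - y) mod N" unfolding cong_def .
  moreover have "N - x \<ge> 1" "N - x \<le> N" "N - y \<ge> 1" "N - y \<le> N" using x y by auto
  ultimately have "N - x = N - y"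
  proof -
    assume m: "(N - x) mod N = (N - y) mod N" and r: "N - x \<ge> 1" "N - x \<le> N" "N - y \<ge> 1" "N - y \<le> N"
    show ?thesis
    proof (cases "N - x = N")
      case True
      then have "(N - y) mod N = 0" using m by simp
      then show ?thesis using r True by (cases "N - y = N") auto
    next
      case False
      then have "N - x < N" using r by simp
      then have "(N - y) mod N \<noteq> 0" using m r by simp
      then have "N - y < N" using r by (cases "N - y = N") auto
      then show ?thesis using m \<open>N - x < N\<close> by simp
    qed
  qed
  then show "x = y" using x y by simp
qed

lemma PE_prod: "(\<Prod>e\<in>PE. w t e) = - (t ^ card PE)"
proof -
  have "(\<Prod>e\<in>PE. w t e) = w t (cyc 1) * (\<Prod>e\<in>PE - {cyc 1}. w t e)"
    using prod.remove[OF finPE neg_PE] by simp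
  also have "(\<Prod>e\<in>PE - {cyc 1}. w t e) = (\<Prod>e\<in>PE - {cyc 1}. t)"
    by (rule prod.cong) (auto simp: w_def)
  also have "\<dots> = t ^ (card PE - 1)" using card_Diff_singleton[OF neg_PE] by simp
  also have "w t (cyc 1) = - t" unfolding w_def by simp
  finally have "(\<Prod>e\<in>PE. w t e) = - (t * t ^ (card PE - 1))" by simp
  moreover have "card PE \<ge> 1" using neg_PE finPE card_gt_0_iff[of PE] by auto
  ultimately show ?thesis by (simp add: power_eq_if)
qed

lemma cyc_inj_on: "inj_on cyc CC" unfolding inj_on_def CC_def using cyc_inj by auto

lemma perm_prod:
  assumes tau: "\<And>c. c \<in> CC \<Longrightarrow> \<psi> ` cyc c = cyc (\<tau> c)" and inj: "inj_on \<tau> CC" and into: "\<tau> ` CC \<subseteq> CC"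
  shows "(\<Prod>e\<in>PE. w t (\<psi> ` e)) = (\<Prod>e\<in>PE. w t e)"
proof -
  have finCC: "finite CC" unfolding CC_def by simp
  have onto: "\<tau> ` CC = CC" using endo_inj_surj[OF finCC into inj] .
  have "(\<Prod>e\<in>PE. w t (\<psi> ` e)) = (\<Prod>c\<in>CC. w t (\<psi> ` cyc c))"
    unfolding PE_def using prod.reindex[OF cyc_inj_on, of "\<lambda>e. w t (\<psi> ` e)"] by (simp add: comp_def)
  also have "\<dots> = (\<Prod>c\<in>CC. w t (cyc (\<tau> c)))" using tau by simp
  also have "\<dots> = (\<Prod>c\<in>\<tau> ` CC. w t (cyc c))" using prod.reindex[OF inj, of "\<lambda>c. w t (cyc c)"] by (simp add: comp_def)
  also have "\<dots> = (\<Prod>c\<in>CC. w t (cyc c))" using onto by simp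
  also have "\<dots> = (\<Prod>e\<in>PE. w t e)" unfolding PE_def using prod.reindex[OF cyc_inj_on, of "w t"] by (simp add: comp_def)
  finally show ?thesis .
qed


lemma pred_ex: "c < N \<Longrightarrow> \<exists>c'<N. sc c' = c"
proof -
  assume c: "c < N"
  show ?thesis
  proof (cases c)
    case 0
    have "N - 1 < N" "sc (N - 1) = 0" using Npos sc_eq[of "N - 1"] by auto
    then show ?thesis using 0 by blast
  next
    case (Suc c')
    then have "c' < N" "sc c' = c" using c sc_eq[of c'] by auto
    then show ?thesis by blast
  qed
qed

lemma PE_Inl: "e \<in> PE \<Longrightarrow> x \<in> e \<Longrightarrow> \<exists>d<N. x = Inl d"
  using PE_elem sc_lt by blast

lemma top_Inl: assumes top: "\<forall>e\<in>PE. \<psi> ` e \<in> PE" and c: "c < N" shows "\<exists>d<N. \<psi> (Inl c) = Inl d"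
proof (cases "c mod L = 0")
  case True
  obtain c' where c': "c' < N" "sc c' = c" using pred_ex[OF c] by blast
  have "c' mod L \<noteq> 0" using sc_mod0_pred[of c'] c' True by simp
  then have "cyc c' \<in> PE" using cyc_PE[OF c'(1)] by simp
  then have "\<psi> ` cyc c' \<in> PE" using top by blast
  moreover have "\<psi> (Inl c) \<in> \<psi> ` cyc c'" unfolding cyc_def using c'(2) by blast
  ultimately show ?thesis using PE_Inl by blast
next
  case False
  then have "cyc c \<in> PE" using cyc_PE[OF c] by simp
  then have "\<psi> ` cyc c \<in> PE" using top by blast
  moreover have "\<psi> (Inl c) \<in> \<psi> ` cyc c" unfolding cyc_def by blast
  ultimately show ?thesis using PE_Inl by blast
qed

lemma top_good: assumes hm: "\<psi> \<in> Hm" and top: "\<forall>e\<in>PE. \<psi> ` e \<in> PE"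
  shows "\<exists>\<pi>. (\<forall>c<N. \<psi> (Inl c) = Inl (\<pi> c)) \<and> good \<pi>"
proof -
  have "\<forall>c. \<exists>d. c < N \<longrightarrow> d < N \<and> \<psi> (Inl c) = Inl d" using top_Inl[OF top] by blast
  then obtain \<pi> where \<pi>: "\<And>c. c < N \<Longrightarrow> \<pi> c < N \<and> \<psi> (Inl c) = Inl (\<pi> c)" by metis
  have img: "\<psi> ` cyc c = {Inl (\<pi> c), Inl (\<pi> (sc c))}" if "c < N" for c
    unfolding cyc_def using \<pi>[OF that] \<pi>[OF sc_lt] by simp
  have adj: "\<pi> (sc c) = sc (\<pi> c) \<or> \<pi> c = sc (\<pi> (sc c))" if "c < N" for c
  proof -
    have "EG (\<psi> (Inl c)) (\<psi> (Inl (sc c)))" using hom_EG[OF hm cyc_edge[OF that]] .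
    then have "EG (Inl (\<pi> c)) (Inl (\<pi> (sc c)))" using \<pi>[OF that] \<pi>[OF sc_lt] by simp
    then show ?thesis using inl_adj by blast
  qed
  have cyc_fw: "{Inl (\<pi> c), Inl (\<pi> (sc c))} = cyc (\<pi> c)" if "\<pi> (sc c) = sc (\<pi> c)" for c
    unfolding cyc_def using that by simp
  have cyc_bw: "{Inl (\<pi> c), Inl (\<pi> (sc c))} = cyc (\<pi> (sc c))" if "\<pi> c = sc (\<pi> (sc c))" for c
    unfolding cyc_def using that by auto
  have "good \<pi>"
    unfolding good_def
  proof (intro conjI allI impI)
    fix c assume c: "c < N"
    show "\<pi> c < N" using \<pi>[OF c] by simp
  next
    fix c assume c: "c < N" and m: "c mod L = 0"
    have "{Inl c, Inl (sc c)} \<notin> PE" using cyc_PE[OF c] m unfolding cyc_def by simp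
    then have nP: "{Inl (\<pi> c), Inl (\<pi> (sc c))} \<notin> PE"
      using hom_notPE[OF hm cyc_edge[OF c]] \<pi>[OF c] \<pi>[OF sc_lt] by simp
    show "\<pi> (sc c) = sc (\<pi> c) \<and> \<pi> c mod L = 0 \<or> \<pi> c = sc (\<pi> (sc c)) \<and> \<pi> (sc c) mod L = 0"
    proof (cases "\<pi> (sc c) = sc (\<pi> c)")
      case True
      then have "cyc (\<pi> c) \<notin> PE" using nP cyc_fw by simp
      then show ?thesis using True cyc_PE[of "\<pi> c"] \<pi>[OF c] by simp
    next
      case False
      then have bw: "\<pi> c = sc (\<pi> (sc c))" using adj[OF c] by simp
      then have "cyc (\<pi> (sc c)) \<notin> PE" using nP cyc_bw by simp
      then show ?thesis using bw cyc_PE[of "\<pi> (sc c)"] \<pi>[OF sc_lt] by simp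
    qed
  next
    fix c assume c: "c < N" and m: "c mod L \<noteq> 0"
    have "cyc c \<in> PE" using cyc_PE[OF c] m by simp
    then have P: "{Inl (\<pi> c), Inl (\<pi> (sc c))} \<in> PE" using top img[OF c] by metis
    show "\<pi> (sc c) = sc (\<pi> c) \<and> \<pi> c mod L \<noteq> 0 \<or> \<pi> c = sc (\<pi> (sc c)) \<and> \<pi> (sc c) mod L \<noteq> 0"
    proof (cases "\<pi> (sc c) = sc (\<pi> c)")
      case True
      then have "cyc (\<pi> c) \<in> PE" using P cyc_fw by simp
      then show ?thesis using True cyc_PE[of "\<pi> c"] \<pi>[OF c] by simp
    next
      case False
      then have bw: "\<pi> c = sc (\<pi> (sc c))" using adj[OF c] by simp
      then have "cyc (\<pi> (sc c)) \<in> PE" using P cyc_bw by simp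
      then show ?thesis using bw cyc_PE[of "\<pi> (sc c)"] \<pi>[OF sc_lt] by simp
    qed
  qed
  then show ?thesis using \<pi> by blast
qed

lemma top_prod:
  assumes hm: "\<psi> \<in> Hm" and top: "\<forall>e\<in>PE. \<psi> ` e \<in> PE"
    and cond: "odd l \<or> (\<forall>i\<in>{1..2*k}. \<exists>j\<in>{1..2*k}. \<psi> (emb i a) = emb j a \<and> \<psi> (emb i b) = emb j b)"
  shows "(\<Prod>e\<in>PE. w t (\<psi> ` e)) = - (t ^ card PE)"
proof -
  obtain \<pi> where \<pi>: "\<And>c. c < N \<Longrightarrow> \<psi> (Inl c) = Inl (\<pi> c)" and g: "good \<pi>"
    using top_good[OF hm top] by blast
  have h: "odd l \<or> (\<forall>c<N. c mod L = 0 \<longrightarrow> \<pi> (sc c) = sc (\<pi> c))"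
  proof (cases "odd l")
    case False
    then have R: "\<forall>i\<in>{1..2*k}. \<exists>j\<in>{1..2*k}. \<psi> (emb i a) = emb j a \<and> \<psi> (emb i b) = emb j b"
      using cond by simp
    have "\<pi> (sc c) = sc (\<pi> c)" if c: "c < N" "c mod L = 0" for c
    proof -
      obtain i where i: "i \<in> {1..2*k}" "c = (i*L) mod N" using root_idx[OF c] by blast
      obtain j where j: "j \<in> {1..2*k}" "\<psi> (emb i a) = emb j a" "\<psi> (emb i b) = emb j b" using R i(1) by blast
      have "Inl (\<pi> c) = Inl ((j*L) mod N)" using \<pi>[OF c(1)] j(2) emb_a i(2) by simp
      moreover have "Inl (\<pi> (sc c)) = Inl (sc ((j*L) mod N))" using \<pi>[OF sc_lt] j(3) emb_b i(2) by simp
      ultimately show ?thesis by simp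
    qed
    then show ?thesis by blast
  qed simp
  have img: "\<psi> ` cyc c = {Inl (\<pi> c), Inl (\<pi> (sc c))}" if "c < N" for c
    unfolding cyc_def using \<pi>[OF that] \<pi>[OF sc_lt] by simp
  have CCN: "c \<in> CC \<Longrightarrow> c < N" for c unfolding CC_def by simp
  have inPE: "\<psi> ` cyc c \<in> PE" if "c \<in> CC" for c
  proof -
    have "cyc c \<in> PE" using that unfolding PE_def by blast
    then show ?thesis using top by blast
  qed
  have "(\<Prod>e\<in>PE. w t (\<psi> ` e)) = (\<Prod>e\<in>PE. w t e)"
  proof (cases "\<forall>c<N. \<pi> (sc c) = sc (\<pi> c)")
    case True
    have tau: "\<psi> ` cyc c = cyc (\<pi> c)" if "c \<in> CC" for c
      using img[OF CCN[OF that]] True CCN[OF that] unfolding cyc_def by simp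
    have inj: "inj_on \<pi> CC" using fw_inj[OF g True] by (rule inj_on_subset) (auto simp: CC_def)
    have into: "\<pi> ` CC \<subseteq> CC"
    proof
      fix d assume "d \<in> \<pi> ` CC"
      then obtain c where c: "c \<in> CC" "d = \<pi> c" by blast
      have "cyc d \<in> PE" using inPE[OF c(1)] tau[OF c(1)] c(2) by simp
      moreover have "d < N" using good_lt[OF g CCN[OF c(1)]] c(2) by simp
      ultimately show "d \<in> CC" using cyc_PE unfolding CC_def by blast
    qed
    show ?thesis using perm_prod[OF tau inj into] .
  next
    case False
    then have bw: "\<forall>c<N. \<pi> c = sc (\<pi> (sc c))" using all_dir[OF g h] by blast
    define \<tau> where "\<tau> c = \<pi> (sc c)" for c
    have tau: "\<psi> ` cyc c = cyc (\<tau> c)" if "c \<in> CC" for c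
      using img[OF CCN[OF that]] bw CCN[OF that] unfolding cyc_def \<tau>_def by auto
    have inj: "inj_on \<tau> CC"
    proof
      fix x y assume x: "x \<in> CC" and y: "y \<in> CC" and e: "\<tau> x = \<tau> y"
      have "sc x = sc y" using bw_inj[OF g bw] e sc_lt unfolding \<tau>_def inj_on_def by simp
      then show "x = y" using sc_inj CCN x y by blast
    qed
    have into: "\<tau> ` CC \<subseteq> CC"
    proof
      fix d assume "d \<in> \<tau> ` CC"
      then obtain c where c: "c \<in> CC" "d = \<tau> c" by blast
      have "cyc d \<in> PE" using inPE[OF c(1)] tau[OF c(1)] c(2) by simp
      moreover have "d < N" using good_lt[OF g sc_lt] c(2) unfolding \<tau>_def by simp
      ultimately show "d \<in> CC" using cyc_PE unfolding CC_def by blast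
    qed
    show ?thesis using perm_prod[OF tau inj into] .
  qed
  then show ?thesis using PE_prod by simp
qed

lemma rigid_hom:
  assumes rig: "rigid V E" and con: "connected V E" and hm: "\<psi> \<in> Hm" and i: "i \<in> {1..2*k}"
  shows "\<exists>j\<in>{1..2*k}. \<psi> (emb i a) = emb j a \<and> \<psi> (emb i b) = emb j b"
proof -
  have edge: "\<exists>j\<in>{1..2*k}. \<exists>p q. E p q \<and> \<psi> (emb i u) = emb j p \<and> \<psi> (emb i v) = emb j q"
    if uv: "E u v" for u v
  proof -
    obtain z where z: "E u z" "E v z" using uv tri unfolding edges_in_triangles_def by blast
    have e1: "EG (\<psi> (emb i u)) (\<psi> (emb i v))" using hom_EG[OF hm fedge_EG[OF i uv]] .
    have e2: "EG (\<psi> (emb i u)) (\<psi> (emb i z))" using hom_EG[OF hm fedge_EG[OF i z(1)]] .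
    have e3: "EG (\<psi> (emb i v)) (\<psi> (emb i z))" using hom_EG[OF hm fedge_EG[OF i z(2)]] .
    show ?thesis using tri_Fedge[OF e1 e2 e3] .
  qed
  obtain j p q where j: "j \<in> {1..2*k}" "E p q" "\<psi> (emb i a) = emb j p" "\<psi> (emb i b) = emb j q"
    using edge[OF ab] by blast
  have pV: "p \<in> V" using EV[OF j(2)] by simp
  have inC: "\<exists>u\<in>V. \<psi> (emb i y) = emb j u" if "y \<in> V" for y
  proof -
    have "(\<lambda>u w. E u w \<and> u \<in> V \<and> w \<in> V)\<^sup>*\<^sup>* a y" using con aV that unfolding connected_def by blast
    then show ?thesis
    proof (induction rule: rtranclp_induct)
      case base then show ?case using j(3) pV by blast
    next
      case (step y z)
      then obtain u where u: "u \<in> V" "\<psi> (emb i y) = emb j u" by blast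
      obtain j' p' q' where j': "j' \<in> {1..2*k}" "E p' q'" "\<psi> (emb i y) = emb j' p'" "\<psi> (emb i z) = emb j' q'"
        using edge[of y z] step(2) by blast
      have "j' = j" using emb_inj[OF j'(1) j(1) conjunct1[OF EV[OF j'(2)]] u(1)] j'(3) u(2) by simp
      then show ?case using j'(4) EV[OF j'(2)] by blast
    qed
  qed
  define g where "g = restrict (\<lambda>u. THE v. v \<in> V \<and> emb j v = \<psi> (emb i u)) V"
  have gprop: "g u \<in> V \<and> emb j (g u) = \<psi> (emb i u)" if uV0: "u \<in> V" for u
  proof -
    obtain v where v: "v \<in> V" "\<psi> (emb i u) = emb j v" using inC[OF uV0] by blast
    have "\<exists>!v. v \<in> V \<and> emb j v = \<psi> (emb i u)"
      using v emb_inj[OF j(1) j(1)] by metis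
    then have "(THE v. v \<in> V \<and> emb j v = \<psi> (emb i u)) \<in> V \<and> emb j (THE v. v \<in> V \<and> emb j v = \<psi> (emb i u)) = \<psi> (emb i u)"
      by (rule theI')
    then show ?thesis unfolding g_def using uV0 by simp
  qed
  have "g \<in> homs V E V E"
    unfolding homs_def
  proof (intro CollectI conjI allI impI)
    show "g \<in> V \<rightarrow>\<^sub>E V" unfolding g_def using gprop by (auto simp: g_def)
  next
    fix u v assume uv: "E u v"
    obtain j' p' q' where j': "j' \<in> {1..2*k}" "E p' q'" "\<psi> (emb i u) = emb j' p'" "\<psi> (emb i v) = emb j' q'"
      using edge[OF uv] by blast
    have uV: "u \<in> V" "v \<in> V" using EV[OF uv] by auto
    have "j' = j \<and> p' = g u" using emb_inj[OF j'(1) j(1) conjunct1[OF EV[OF j'(2)]] conjunct1[OF gprop[OF uV(1)]]]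
      j'(3) gprop[OF uV(1)] by simp
    moreover have "q' = g v" using emb_inj[OF j'(1) j(1) conjunct2[OF EV[OF j'(2)]] conjunct1[OF gprop[OF uV(2)]]]
      j'(4) gprop[OF uV(2)] by simp
    ultimately show "E (g u) (g v)" using j'(2) by simp
  qed
  then have "g = restrict id V" using rig unfolding rigid_def by blast
  then have "g a = a" "g b = b" using aV bV by auto
  then show ?thesis using gprop[OF aV] gprop[OF bV] j(1) by metis
qed


end

lemma transfer:
  fixes V' :: "'b set" and E' :: "'b \<Rightarrow> 'b \<Rightarrow> bool" and w' :: "'b set \<Rightarrow> real"
  assumes fin: "finite V'" and inV: "\<And>x y. E' x y \<Longrightarrow> x \<in> V' \<and> y \<in> V'"
    and sym: "\<And>x y. E' x y \<Longrightarrow> E' y x" and irr: "\<And>x. \<not> E' x x"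
  shows "\<exists>(W::nat set) D wt. simple_graph W D \<and>
     hom_weight V' E' W D wt = (\<Sum>\<psi>\<in>homs V' E' V' E'. \<Prod>e\<in>edges E'. w' (\<psi> ` e))"
proof -
  obtain enc :: "'b \<Rightarrow> nat" and n where enc: "enc ` V' = {i. i < n}" "inj_on enc V'"
    using finite_imp_inj_to_nat_seg[OF fin] by blast
  define W where "W = enc ` V'"
  define D where "D = (\<lambda>x y. \<exists>u v. E' u v \<and> x = enc u \<and> y = enc v)"
  define wt where "wt = (\<lambda>S. w' (inv_into V' enc ` S))"
  define h where "h = (\<lambda>\<psi>. restrict (enc \<circ> \<psi>) V')"
  define HH where "HH = homs V' E' V' E'"
  have s1: "x \<in> W \<and> y \<in> W \<and> D y x" if dxy: "D x y" for x y
  proof -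
    obtain u v where uv: "E' u v" "x = enc u" "y = enc v" using dxy unfolding D_def by blast
    show ?thesis using inV[OF uv(1)] sym[OF uv(1)] uv unfolding W_def D_def by blast
  qed
  have s2: "\<not> D x x" for x
  proof
    assume "D x x"
    then obtain u v where uv: "E' u v" "x = enc u" "x = enc v" unfolding D_def by blast
    then have "u = v" using inV[OF uv(1)] enc(2) unfolding inj_on_def by metis
    then show False using irr uv(1) by simp
  qed
  have sgW: "simple_graph W D"
    unfolding simple_graph_def using s1 s2 fin unfolding W_def by blast
  have himg: "homs V' E' W D = h ` HH"
  proof
    show "h ` HH \<subseteq> homs V' E' W D"
    proof
      fix f assume "f \<in> h ` HH"
      then obtain \<psi> where \<psi>: "\<psi> \<in> HH" "f = h \<psi>" by blast
      have "f \<in> V' \<rightarrow>\<^sub>E W" using \<psi> unfolding h_def HH_def homs_def W_def by auto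
      moreover have "D (f x) (f y)" if "E' x y" for x y
      proof -
        have "E' (\<psi> x) (\<psi> y)" using \<psi>(1) that unfolding HH_def homs_def by blast
        then show ?thesis using inV[OF that] \<psi>(2) unfolding D_def h_def by auto
      qed
      ultimately show "f \<in> homs V' E' W D" unfolding homs_def by blast
    qed
  next
    show "homs V' E' W D \<subseteq> h ` HH"
    proof
      fix f assume f: "f \<in> homs V' E' W D"
      define \<psi> where "\<psi> = restrict (inv_into V' enc \<circ> f) V'"
      have fW: "x \<in> V' \<Longrightarrow> f x \<in> enc ` V'" for x using f unfolding homs_def W_def by auto
      have "\<psi> \<in> V' \<rightarrow>\<^sub>E V'" unfolding \<psi>_def using fW by (auto simp: inv_into_into)
      moreover have "E' (\<psi> x) (\<psi> y)" if "E' x y" for x y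
      proof -
        have "D (f x) (f y)" using f that unfolding homs_def by blast
        then obtain u v where uv: "E' u v" "f x = enc u" "f y = enc v" unfolding D_def by blast
        have "\<psi> x = u" "\<psi> y = v" using inV[OF that] inV[OF uv(1)] uv enc(2)
          unfolding \<psi>_def by (auto simp: inv_into_f_f)
        then show ?thesis using uv(1) by simp
      qed
      ultimately have "\<psi> \<in> HH" unfolding HH_def homs_def by blast
      moreover have "f = h \<psi>"
      proof
        fix x show "f x = h \<psi> x"
        proof (cases "x \<in> V'")
          case True then show ?thesis unfolding h_def \<psi>_def using fW[OF True] by (simp add: f_inv_into_f)
        next
          case False then show ?thesis using f unfolding h_def homs_def by (auto simp: PiE_def extensional_def)
        qed
      qed
      ultimately show "f \<in> h ` HH" by blast
    qed
  qed
  have hinj: "inj_on h HH"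
  proof
    fix \<psi> \<psi>' assume \<psi>: "\<psi> \<in> HH" "\<psi>' \<in> HH" "h \<psi> = h \<psi>'"
    show "\<psi> = \<psi>'"
    proof
      fix x show "\<psi> x = \<psi>' x"
      proof (cases "x \<in> V'")
        case True
        then have "enc (\<psi> x) = enc (\<psi>' x)" using fun_cong[OF \<psi>(3), of x] unfolding h_def by simp
        moreover have "\<psi> x \<in> V'" "\<psi>' x \<in> V'" using \<psi> True unfolding HH_def homs_def by auto
        ultimately show ?thesis using enc(2) unfolding inj_on_def by blast
      next
        case False then show ?thesis using \<psi>(1,2) unfolding HH_def homs_def by (auto simp: PiE_def extensional_def)
      qed
    qed
  qed
  have "hom_weight V' E' W D wt = (\<Sum>\<psi>\<in>HH. \<Prod>e\<in>edges E'. wt (h \<psi> ` e))"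
    unfolding hom_weight_def himg using sum.reindex[OF hinj] by simp
  also have "\<dots> = (\<Sum>\<psi>\<in>HH. \<Prod>e\<in>edges E'. w' (\<psi> ` e))"
  proof (rule sum.cong[OF refl], rule prod.cong[OF refl])
    fix \<psi> e assume \<psi>: "\<psi> \<in> HH" and e: "e \<in> edges E'"
    have eV: "e \<subseteq> V'" using e inV unfolding edges_def by blast
    have pV: "\<psi> ` e \<subseteq> V'" using \<psi> eV unfolding HH_def homs_def by auto
    have "h \<psi> ` e = enc ` \<psi> ` e" using eV unfolding h_def by auto
    then have "inv_into V' enc ` h \<psi> ` e = \<psi> ` e" using pV enc(2)
      by (auto simp: image_image inv_into_f_f subset_iff)
    then show "wt (h \<psi> ` e) = w' (\<psi> ` e)" unfolding wt_def by simp
  qed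
  finally show ?thesis using sgW unfolding HH_def by blast
qed


theorem mainTheorem13:
  fixes V :: "'a set" and E :: "'a \<Rightarrow> 'a \<Rightarrow> bool" and a b :: 'a and k l :: nat
  assumes "k \<ge> 2" and "l \<ge> 2"
    and "simple_graph V E" and "E a b" and "connected V E"
    and "\<forall>v. \<not> cut_vertex V E v"
    and "edges_in_triangles E"
    and "\<forall>\<phi>\<in>homs V E V E. \<forall>\<psi>\<in>homs V E V E.
           \<phi> \<noteq> restrict id V \<longrightarrow> \<psi> \<noteq> restrict id V \<longrightarrow> \<phi> = \<psi>"
    and "\<forall>\<phi>\<in>homs V E V E. \<phi> \<noteq> restrict id V \<longrightarrow>
           automorphism V E \<phi> \<and> \<phi> a = b \<and> \<phi> b = a"
    and "odd l \<or> (even l \<and> rigid V E)"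
  shows "\<not> positive (sun_V V a b k l) (sun_E E a b k l)"
proof -
  interpret S: sunloc V E a b k l
    using assms by (unfold_locales) auto
  have top: "(\<Prod>e\<in>S.PE. S.w t (\<psi> ` e)) = - (t ^ card S.PE)"
    if hm: "\<psi> \<in> S.Hm" and tp: "\<forall>e\<in>S.PE. \<psi> ` e \<in> S.PE" for \<psi> t
  proof -
    have "odd l \<or> (\<forall>i\<in>{1..2*k}. \<exists>j\<in>{1..2*k}. \<psi> (sun_emb a b k l i a) = sun_emb a b k l j a \<and> \<psi> (sun_emb a b k l i b) = sun_emb a b k l j b)"
    proof (cases "odd l")
      case False
      then have "rigid V E" using assms(10) by simp
      then show ?thesis using S.rigid_hom[OF _ assms(5) hm] by blast
    qed simp
    then show ?thesis using S.top_prod[OF hm tp] by blast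
  qed
  define t0 where "t0 = real (card S.Hm)"
  have neg: "(\<Sum>\<psi>\<in>S.Hm. S.pw t0 \<psi>) < 0" unfolding t0_def using S.sum_neg[OF top] by blast
  obtain W :: "nat set" and D wt where W: "simple_graph W D"
    and hw: "hom_weight (sun_V V a b k l) (sun_E E a b k l) W D wt
       = (\<Sum>\<psi>\<in>homs (sun_V V a b k l) (sun_E E a b k l) (sun_V V a b k l) (sun_E E a b k l).
           \<Prod>e\<in>edges (sun_E E a b k l). S.w t0 (\<psi> ` e))"
    using transfer[of "sun_V V a b k l" "sun_E E a b k l" "S.w t0"] S.finVG S.EG_VG S.EG_sym S.EG_irr
    by blast
  have lt: "hom_weight (sun_V V a b k l) (sun_E E a b k l) W D wt < 0"
    using hw neg unfolding S.Hm_def S.pw_def by simp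
  show ?thesis
  proof
    assume "positive (sun_V V a b k l) (sun_E E a b k l)"
    then have "0 \<le> hom_weight (sun_V V a b k l) (sun_E E a b k l) W D wt"
      unfolding positive_def using W by blast
    then show False using lt by simp
  qed
qed

end
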